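(* Let $\mathcal{D}$ be the arena of a $p$-periodic graph on $V$, let $\mathcal{A}$ be an augmented arena of $\mathcal{D}$, and let $\mathcal{A}^*$ be the maximum augmented arena. Then $\mathcal{A}=\mathcal{A}^*$ if and only if for every $t\in\mathbb{Z}_p$ and $x,y\in V$ with $((t,x),([t+1]_p,y))\notin E(\mathcal{A})$ there is no $z\in\Gamma_t(x,\mathcal{D})$ such that $(t,y)$ is a shadow corner of $([t+1]_p,z)$ with respect to $\mathcal{A}$.
   Context: Let $V$ be a finite set and $p\ge 1$ an integer; $[t]_p$ denotes $t \bmod p$. A $p$-periodic graph $\mathcal{G}=(G_0,\dots,G_{p-1})^*$ is the infinite sequence of directed graphs $G_t=(V,E_{[t]_p})$ where $E_0,\dots,E_{p-1}\subseteq V\times V$ (self-loops allowed), each $G_i$ sinkless. An arena on $V$ of length $p$ is a directed graph with vertex set $\mathbb{Z}_p\times V$ (temporal nodes) all of whose edges have the form $((i,w),([i+1]_p,w'))$. The arena of $\mathcal{G}$ is the arena $\mathcal{D}$ with $((i,u),([i+1]_p,v))\in E(\mathcal{D})$ iff $(u,v)\in E_i$. Write $\Gamma_t(u,\mathcal{M})=\{v : ((t,u),([t+1]_p,v))\in E(\mathcal{M})\}$. Game: first the cop, then the robber choose vertices. In each round $t$, with cop at $c$ and robber at $r$, the cop must move to some $c'\in\Gamma_{[t]_p}(c,\mathcal{D})$; if $c'=r$ the cop wins; otherwise the robber must move to some $r'\in\Gamma_{[t]_p}(r,\mathcal{D})$ and the next round starts. A configuration $(t,c,r)$ ($t\in\mathbb{Z}_p$)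 is the state at the start of a round with index $\equiv t\pmod p$, cop at $c$, robber at $r$, cop to move; it is copwin if from it the cop can force capture in finitely many rounds against every robber strategy. An augmented arena of $\mathcal{D}$ is an arena $\mathcal{A}$ with $E(\mathcal{D})\subseteq E(\mathcal{A})$ such that for every edge $((t,x),([t+1]_p,y))\in E(\mathcal{A})$ the configuration $(t,x,y)$ is copwin. $\mathcal{A}^*$ denotes the maximum augmented arena, whose edge set is the union of the edge sets of all augmented arenas. Given an augmented arena $\mathcal{A}$, a temporal node $(t,u)$ is a shadow corner of $([t+1]_p,v)$ if $v\neq u$ and $\Gamma_t(u,\mathcal{D})\subseteq\Gamma_{[t+1]_p}(v,\mathcal{A})$. *)

theory Defs
  imports Main
begin

text \<open>Temporal nodes are pairs (i, w) with i < p (representing Z_p) and w in V.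
  Time indices are natural numbers taken modulo p.\<close>

type_synonym 'v tnode = "nat \<times> 'v"
type_synonym 'v arena = "('v tnode \<times> 'v tnode) set"

definition periodic_graph :: "'v set \<Rightarrow> nat \<Rightarrow> (nat \<Rightarrow> ('v \<times> 'v) set) \<Rightarrow> bool" where
  "periodic_graph V p E \<longleftrightarrow> finite V \<and> p \<ge> 1 \<and>
     (\<forall>i<p. E i \<subseteq> V \<times> V) \<and>
     (\<forall>i<p. \<forall>u\<in>V. \<exists>v. (u, v) \<in> E i)"

definition is_arena :: "'v set \<Rightarrow> nat \<Rightarrow> 'v arena \<Rightarrow> bool" where
  "is_arena V p M \<longleftrightarrow>
     (\<forall>e\<in>M. \<exists>i w w'. i < p \<and> w \<in> V \<and> w' \<in> V \<and> e = ((i, w), ((i + 1) mod p, w')))"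

definition arena_of :: "nat \<Rightarrow> (nat \<Rightarrow> ('v \<times> 'v) set) \<Rightarrow> 'v arena" where
  "arena_of p E = {((i, u), ((i + 1) mod p, v)) | i u v. i < p \<and> (u, v) \<in> E i}"

definition Gamma :: "nat \<Rightarrow> nat \<Rightarrow> 'v \<Rightarrow> 'v arena \<Rightarrow> 'v set" where
  "Gamma p t u M = {v. ((t, u), ((t + 1) mod p, v)) \<in> M}"

text \<open>copwin p D (t, c, r): from configuration (t,c,r), cop to move, the cop can force
  capture in finitely many rounds (least fixed point / attractor of the capture condition).\<close>
inductive copwin :: "nat \<Rightarrow> 'v arena \<Rightarrow> nat \<Rightarrow> 'v \<Rightarrow> 'v \<Rightarrow> bool" for p D where
  step: "c' \<in> Gamma p t c D \<Longrightarrow>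
         (c' = r \<or> (\<forall>r' \<in> Gamma p t r D. copwin p D ((t + 1) mod p) c' r')) \<Longrightarrow>
         copwin p D t c r"

definition augmented_arena :: "'v set \<Rightarrow> nat \<Rightarrow> 'v arena \<Rightarrow> 'v arena \<Rightarrow> bool" where
  "augmented_arena V p D A \<longleftrightarrow> is_arena V p A \<and> D \<subseteq> A \<and>
     (\<forall>t x t' y. ((t, x), (t', y)) \<in> A \<longrightarrow> copwin p D t x y)"

definition max_augmented_arena :: "'v set \<Rightarrow> nat \<Rightarrow> 'v arena \<Rightarrow> 'v arena" where
  "max_augmented_arena V p D = \<Union>{A. augmented_arena V p D A}"

definition shadow_corner :: "nat \<Rightarrow> 'v arena \<Rightarrow> 'v arena \<Rightarrow> nat \<Rightarrow> 'v \<Rightarrow> 'v \<Rightarrow> bool" where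
  "shadow_corner p D A t u v \<longleftrightarrow>
     v \<noteq> u \<and> Gamma p t u D \<subseteq> Gamma p ((t + 1) mod p) v A"

end

theory Submission
  imports Defs
begin

lemma gamma_arena_of:
  assumes "periodic_graph V p E" "t < p" "c \<in> Gamma p t x (arena_of p E)"
  shows "(x, c) \<in> E t" "c \<in> V"
proof -
  from assms(3) obtain i u v where "((t, x), ((t + 1) mod p, c)) = ((i, u), ((i + 1) mod p, v))"
     "i < p" "(u, v) \<in> E i"
    unfolding Gamma_def arena_of_def by blast
  then show "(x, c) \<in> E t" by auto
  then show "c \<in> V" using assms(1,2) unfolding periodic_graph_def by auto
qed

lemma key:
  assumes pg: "periodic_graph V p E"
    and aug: "augmented_arena V p (arena_of p E) A"
  shows "copwin p (arena_of p E) t x y \<Longrightarrow> t < p \<Longrightarrow> x \<in> V \<Longrightarrow> y \<in> V \<Longrightarrow>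
     ((t, x), ((t + 1) mod p, y)) \<notin> A \<Longrightarrow>
     \<exists>t'<p. \<exists>x'\<in>V. \<exists>y'\<in>V. ((t', x'), ((t' + 1) mod p, y')) \<notin> A \<and>
       (\<exists>z \<in> Gamma p t' x' (arena_of p E). shadow_corner p (arena_of p E) A t' y' z)"
proof (induction t x y rule: copwin.induct)
  case (step c' t c r)
  have p1: "p \<ge> 1" using pg unfolding periodic_graph_def by auto
  have DA: "arena_of p E \<subseteq> A" using aug unfolding augmented_arena_def by auto
  have cV: "c' \<in> V" using gamma_arena_of(2)[OF pg step.prems(1) step.hyps(1)] .
  have neq: "c' \<noteq> r"
  proof
    assume "c' = r"
    then have "((t, c), ((t + 1) mod p, r)) \<in> arena_of p E"
      using step.hyps(1) unfolding Gamma_def by auto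
    then show False using DA step.prems(4) by auto
  qed
  then have all: "\<forall>r' \<in> Gamma p t r (arena_of p E). copwin p (arena_of p E) ((t + 1) mod p) c' r' \<and>
      ((t + 1) mod p < p \<longrightarrow> c' \<in> V \<longrightarrow> r' \<in> V \<longrightarrow>
       (((t + 1) mod p, c'), (((t + 1) mod p + 1) mod p, r')) \<notin> A \<longrightarrow>
       (\<exists>t'<p. \<exists>x'\<in>V. \<exists>y'\<in>V. ((t', x'), ((t' + 1) mod p, y')) \<notin> A \<and>
       (\<exists>z \<in> Gamma p t' x' (arena_of p E). shadow_corner p (arena_of p E) A t' y' z)))"
    using step.IH neq by auto
  show ?case
  proof (cases "Gamma p t r (arena_of p E) \<subseteq> Gamma p ((t + 1) mod p) c' A")
    case True
    then show ?thesis using step.prems step.hyps(1) neq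
      unfolding shadow_corner_def by blast
  next
    case False
    then obtain r' where r': "r' \<in> Gamma p t r (arena_of p E)"
      "(((t + 1) mod p, c'), (((t + 1) mod p + 1) mod p, r')) \<notin> A"
      unfolding Gamma_def by auto
    have "r' \<in> V" using gamma_arena_of(2)[OF pg step.prems(1) r'(1)] .
    moreover have "(t + 1) mod p < p" using p1 by auto
    ultimately show ?thesis using all r' cV by blast
  qed
qed

theorem theorem3:
  fixes V :: "'v set" and p :: nat and E :: "nat \<Rightarrow> ('v \<times> 'v) set" and A :: "'v arena"
  assumes "periodic_graph V p E"
    and "augmented_arena V p (arena_of p E) A"
  shows "A = max_augmented_arena V p (arena_of p E) \<longleftrightarrow>
    (\<forall>t<p. \<forall>x\<in>V. \<forall>y\<in>V. ((t, x), ((t + 1) mod p, y)) \<notin> A \<longrightarrow>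
       \<not> (\<exists>z \<in> Gamma p t x (arena_of p E). shadow_corner p (arena_of p E) A t y z))"
proof
  assume eq: "A = max_augmented_arena V p (arena_of p E)"
  show "\<forall>t<p. \<forall>x\<in>V. \<forall>y\<in>V. ((t, x), ((t + 1) mod p, y)) \<notin> A \<longrightarrow>
       \<not> (\<exists>z \<in> Gamma p t x (arena_of p E). shadow_corner p (arena_of p E) A t y z)"
  proof (intro allI impI ballI notI)
    fix t x y
    assume t: "t < p" and x: "x \<in> V" and y: "y \<in> V"
      and nA: "((t, x), ((t + 1) mod p, y)) \<notin> A"
      and ex: "\<exists>z \<in> Gamma p t x (arena_of p E). shadow_corner p (arena_of p E) A t y z"
    then obtain z where z: "z \<in> Gamma p t x (arena_of p E)"
      "z \<noteq> y" "Gamma p t y (arena_of p E) \<subseteq> Gamma p ((t + 1) mod p) z A"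
      unfolding shadow_corner_def by auto
    have cw: "copwin p (arena_of p E) t x y"
    proof (rule copwin.step[OF z(1)])
      have "\<forall>r'\<in>Gamma p t y (arena_of p E). copwin p (arena_of p E) ((t + 1) mod p) z r'"
      proof
        fix r' assume "r' \<in> Gamma p t y (arena_of p E)"
        then have "(((t + 1) mod p, z), (((t + 1) mod p + 1) mod p, r')) \<in> A"
          using z(3) unfolding Gamma_def by auto
        then show "copwin p (arena_of p E) ((t + 1) mod p) z r'"
          using assms(2) unfolding augmented_arena_def by blast
      qed
      then show "z = y \<or> (\<forall>r'\<in>Gamma p t y (arena_of p E). copwin p (arena_of p E) ((t + 1) mod p) z r')"
        by blast
    qed
    let ?B = "insert ((t, x), ((t + 1) mod p, y)) A"
    have "augmented_arena V p (arena_of p E) ?B"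
      using assms(2) cw t x y unfolding augmented_arena_def is_arena_def by blast
    then have "?B \<subseteq> max_augmented_arena V p (arena_of p E)"
      unfolding max_augmented_arena_def by blast
    then show False using eq nA by auto
  qed
next
  assume R: "\<forall>t<p. \<forall>x\<in>V. \<forall>y\<in>V. ((t, x), ((t + 1) mod p, y)) \<notin> A \<longrightarrow>
       \<not> (\<exists>z \<in> Gamma p t x (arena_of p E). shadow_corner p (arena_of p E) A t y z)"
  show "A = max_augmented_arena V p (arena_of p E)"
  proof
    show "A \<subseteq> max_augmented_arena V p (arena_of p E)"
      using assms(2) unfolding max_augmented_arena_def by blast
  next
    show "max_augmented_arena V p (arena_of p E) \<subseteq> A"
    proof
      fix e assume "e \<in> max_augmented_arena V p (arena_of p E)"
      then obtain B where B: "augmented_arena V p (arena_of p E) B" "e \<in> B"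
        unfolding max_augmented_arena_def by blast
      then obtain i w w' where e: "i < p" "w \<in> V" "w' \<in> V" "e = ((i, w), ((i + 1) mod p, w'))"
        unfolding augmented_arena_def is_arena_def by blast
      have cw: "copwin p (arena_of p E) i w w'"
        using B e(4) unfolding augmented_arena_def by blast
      show "e \<in> A"
      proof (rule ccontr)
        assume "e \<notin> A"
        then show False using key[OF assms cw e(1-3)] e(4) R by blast
      qed
    qed
  qed
qed

end
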